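(* Let $\Omega$ be a topological space, $X$ a locally convex topological vector space with defining family of seminorms $\mathfrak{A}$, $V \subset F(\Omega, \mathbb{R}_+)$, $f \in F(\Omega, X)$, $W \subset F(\Omega, X)$, $p \in \mathfrak{A}$, $v \in V$. Assume $\overline{(vf)(\Omega)}$ is compact. Then $d_{v, p, \Omega}(f, W) = 0$ if and only if for any $\varepsilon > 0$ and any finitely many $x_1, \dots, x_n \in X$ there is $g \in W$ such that for all $x\in\Omega$ and $i=1,\dots,n$: if $p(v(x)f(x) - x_i) < \varepsilon$ then $p(v(x)g(x) - x_i) < 2\varepsilon$.
   Context: $vf$ denotes the function $x\mapsto v(x)f(x)$. $d_{v,p,\Omega}(f,W)=\inf_{g\in W}\sup_{x\in\Omega}v(x)p(f(x)-g(x))$. *)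

theory Defs
  imports "HOL-Analysis.Analysis"
begin

definition seminorm :: "('x::real_vector \<Rightarrow> real) \<Rightarrow> bool" where
  "seminorm p \<longleftrightarrow> (\<forall>x. 0 \<le> p x) \<and> (\<forall>x y. p (x + y) \<le> p x + p y)
     \<and> (\<forall>c x. p (c *\<^sub>R x) = \<bar>c\<bar> * p x)"

definition seminorm_topology :: "('x::real_vector \<Rightarrow> real) set \<Rightarrow> 'x topology" where
  "seminorm_topology A = topology (\<lambda>U. \<forall>x\<in>U. \<exists>F e. finite F \<and> F \<subseteq> A \<and> 0 < e \<and>
       {y. \<forall>q\<in>F. q (y - x) < e} \<subseteq> U)"

definition weighted_dist ::
  "('a \<Rightarrow> real) \<Rightarrow> ('x::real_vector \<Rightarrow> real) \<Rightarrow> 'a set \<Rightarrow> ('a \<Rightarrow> 'x) \<Rightarrow> ('a \<Rightarrow> 'x) set \<Rightarrow> ennreal" where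
  "weighted_dist v p \<Omega> f W = (INF g\<in>W. SUP x\<in>\<Omega>. ennreal (v x * p (f x - g x)))"

end

theory Submission
  imports Defs
begin

lemma semi_neg: assumes "seminorm p" shows "p (a - b) = p (b - a)"
proof -
  have "a - b = (-1) *\<^sub>R (b - a)" by simp
  then have "p (a - b) = p ((-1) *\<^sub>R (b - a))" by simp
  also have "... = p (b - a)" using assms unfolding seminorm_def by (metis abs_neg_one mult_1)
  finally show ?thesis .
qed

lemma semi_tri: assumes "seminorm p" shows "p (a - c) \<le> p (a - b) + p (b - c)"
proof -
  have "a - c = (a - b) + (b - c)" by simp
  moreover have "p ((a - b) + (b - c)) \<le> p (a - b) + p (b - c)" using assms unfolding seminorm_def by blast
  ultimately show ?thesis by simp
qed

lemma istop_semi: fixes A :: "('a::real_vector \<Rightarrow> real) set" shows "istopology (\<lambda>U. \<forall>x\<in>U. \<exists>F e. finite F \<and> F \<subseteq> A \<and> 0 < e \<and>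
       {y. \<forall>q\<in>F. q (y - x) < e} \<subseteq> U)"
  unfolding istopology_def
proof (intro conjI allI impI)
  fix S T :: "'a set"
  assume S: "\<forall>x\<in>S. \<exists>F e. finite F \<and> F \<subseteq> A \<and> 0 < e \<and> {y. \<forall>q\<in>F. q (y - x) < e} \<subseteq> S"
    and T: "\<forall>x\<in>T. \<exists>F e. finite F \<and> F \<subseteq> A \<and> 0 < e \<and> {y. \<forall>q\<in>F. q (y - x) < e} \<subseteq> T"
  show "\<forall>x\<in>S \<inter> T. \<exists>F e. finite F \<and> F \<subseteq> A \<and> 0 < e \<and> {y. \<forall>q\<in>F. q (y - x) < e} \<subseteq> S \<inter> T"
  proof
    fix x assume x: "x \<in> S \<inter> T"
    then have "x \<in> S" by simp
    then have "\<exists>F e. finite F \<and> F \<subseteq> A \<and> 0 < e \<and> {y. \<forall>q\<in>F. q (y - x) < e} \<subseteq> S"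
      using S by (rule bspec[rotated])
    then obtain F1 e1 where a: "finite F1" "F1 \<subseteq> A" "0 < e1" "{y. \<forall>q\<in>F1. q (y - x) < e1} \<subseteq> S"
      by (elim exE conjE) 
    have "x \<in> T" using x by simp
    then have "\<exists>F e. finite F \<and> F \<subseteq> A \<and> 0 < e \<and> {y. \<forall>q\<in>F. q (y - x) < e} \<subseteq> T"
      using T by (rule bspec[rotated])
    then obtain F2 e2 where b: "finite F2" "F2 \<subseteq> A" "0 < e2" "{y. \<forall>q\<in>F2. q (y - x) < e2} \<subseteq> T"
      by (elim exE conjE)
    show "\<exists>F e. finite F \<and> F \<subseteq> A \<and> 0 < e \<and> {y. \<forall>q\<in>F. q (y - x) < e} \<subseteq> S \<inter> T"
    proof (intro exI conjI)
      show "finite (F1 \<union> F2)" "F1 \<union> F2 \<subseteq> A" "0 < min e1 e2" using a b by auto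
      show "{y. \<forall>q\<in>F1 \<union> F2. q (y - x) < min e1 e2} \<subseteq> S \<inter> T"
      proof
        fix y assume "y \<in> {y. \<forall>q\<in>F1 \<union> F2. q (y - x) < min e1 e2}"
        then have y: "\<forall>q\<in>F1 \<union> F2. q (y - x) < min e1 e2" by simp
        have "y \<in> S" using a(4) y by fastforce
        moreover have "y \<in> T" using b(4) y by fastforce
        ultimately show "y \<in> S \<inter> T" by blast
      qed
    qed
  qed
next
  fix K :: "'a set set"
  assume KK: "\<forall>U\<in>K. \<forall>x\<in>U. \<exists>F e. finite F \<and> F \<subseteq> A \<and> 0 < e \<and> {y. \<forall>q\<in>F. q (y - x) < e} \<subseteq> U"
  show "\<forall>x\<in>\<Union>K. \<exists>F e. finite F \<and> F \<subseteq> A \<and> 0 < e \<and> {y. \<forall>q\<in>F. q (y - x) < e} \<subseteq> \<Union>K"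
  proof
    fix x assume "x \<in> \<Union>K"
    then obtain U where U: "U \<in> K" "x \<in> U" by (rule UnionE)
    have "\<forall>x\<in>U. \<exists>F e. finite F \<and> F \<subseteq> A \<and> 0 < e \<and> {y. \<forall>q\<in>F. q (y - x) < e} \<subseteq> U"
      using KK U(1) by (rule bspec)
    then have "\<exists>F e. finite F \<and> F \<subseteq> A \<and> 0 < e \<and> {y. \<forall>q\<in>F. q (y - x) < e} \<subseteq> U"
      using U(2) by (rule bspec)
    then obtain F e where Fe: "finite F" "F \<subseteq> A" "0 < e" "{y. \<forall>q\<in>F. q (y - x) < e} \<subseteq> U"
      by (elim exE conjE)
    have "U \<subseteq> \<Union>K" using U(1) by (rule Union_upper)
    then have "{y. \<forall>q\<in>F. q (y - x) < e} \<subseteq> \<Union>K" using Fe(4) by (rule order_trans[rotated])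
    then show "\<exists>F e. finite F \<and> F \<subseteq> A \<and> 0 < e \<and> {y. \<forall>q\<in>F. q (y - x) < e} \<subseteq> \<Union>K"
      using Fe(1-3) by blast
  qed
qed

lemma openin_semi: "openin (seminorm_topology A) = (\<lambda>U. \<forall>x\<in>U. \<exists>F e. finite F \<and> F \<subseteq> A \<and> 0 < e \<and>
       {y. \<forall>q\<in>F. q (y - x) < e} \<subseteq> U)"
  unfolding seminorm_topology_def by (rule topology_inverse'[OF istop_semi])

lemma topspace_semi: "topspace (seminorm_topology A) = UNIV"
proof -
  have "openin (seminorm_topology A) UNIV" unfolding openin_semi
    by (auto intro!: exI[of _ "{}"] exI[of _ "1::real"])
  then show ?thesis using openin_subset by auto
qed

lemma ball_open: assumes "seminorm p" "p \<in> A"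
  shows "openin (seminorm_topology A) {y. p (y - c) < e}"
  unfolding openin_semi
proof
  fix x assume x: "x \<in> {y. p (y - c) < e}"
  show "\<exists>F e'. finite F \<and> F \<subseteq> A \<and> 0 < e' \<and> {y. \<forall>q\<in>F. q (y - x) < e'} \<subseteq> {y. p (y - c) < e}"
  proof (intro exI conjI)
    show "finite {p}" "{p} \<subseteq> A" using assms by auto
    show "0 < e - p (x - c)" using x by simp
    show "{y. \<forall>q\<in>{p}. q (y - x) < e - p (x - c)} \<subseteq> {y. p (y - c) < e}"
    proof
      fix y assume "y \<in> {y. \<forall>q\<in>{p}. q (y - x) < e - p (x - c)}"
      then have "p (y - x) < e - p (x - c)" by simp
      moreover have "p (y - c) \<le> p (y - x) + p (x - c)" by (rule semi_tri[OF assms(1)])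
      ultimately show "y \<in> {y. p (y - c) < e}" by simp
    qed
  qed
qed

theorem lemma3p3:
  fixes T :: "'a topology" and \<Omega> :: "'a set"
    and A :: "('x::real_vector \<Rightarrow> real) set" and p :: "'x \<Rightarrow> real"
    and v :: "'a \<Rightarrow> real" and f :: "'a \<Rightarrow> 'x" and W :: "('a \<Rightarrow> 'x) set"
  assumes "\<Omega> = topspace T"
    and "\<forall>q\<in>A. seminorm q"
    and "p \<in> A"
    and "\<forall>x\<in>\<Omega>. 0 \<le> v x"
    and "compactin (seminorm_topology A)
           ((seminorm_topology A) closure_of ((\<lambda>x. v x *\<^sub>R f x) ` \<Omega>))"
  shows "weighted_dist v p \<Omega> f W = 0 \<longleftrightarrow>
    (\<forall>\<epsilon>>0. \<forall>S. finite S \<longrightarrow> (\<exists>g\<in>W. \<forall>x\<in>\<Omega>. \<forall>xi\<in>S.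
        p (v x *\<^sub>R f x - xi) < \<epsilon> \<longrightarrow> p (v x *\<^sub>R g x - xi) < 2 * \<epsilon>))"
proof -
  have sp: "seminorm p" using assms(2,3) by auto
  have key: "v x * p (f x - g x) = p (v x *\<^sub>R f x - v x *\<^sub>R g x)" if "x \<in> \<Omega>" for x g
  proof -
    have "p (v x *\<^sub>R f x - v x *\<^sub>R g x) = p (v x *\<^sub>R (f x - g x))" by (simp add: scaleR_diff_right)
    also have "... = v x * p (f x - g x)" using sp assms(4) that unfolding seminorm_def by simp
    finally show ?thesis by simp
  qed
  show ?thesis
  proof
    assume d0: "weighted_dist v p \<Omega> f W = 0"
    show "\<forall>\<epsilon>>0. \<forall>S. finite S \<longrightarrow> (\<exists>g\<in>W. \<forall>x\<in>\<Omega>. \<forall>xi\<in>S.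
        p (v x *\<^sub>R f x - xi) < \<epsilon> \<longrightarrow> p (v x *\<^sub>R g x - xi) < 2 * \<epsilon>)"
    proof (intro allI impI)
      fix \<epsilon> :: real and S :: "'x set" assume e: "\<epsilon> > 0" "finite S"
      have "(INF g\<in>W. SUP x\<in>\<Omega>. ennreal (v x * p (f x - g x))) < ennreal \<epsilon>"
        using d0 e unfolding weighted_dist_def by simp
      then obtain g where g: "g \<in> W" "(SUP x\<in>\<Omega>. ennreal (v x * p (f x - g x))) < ennreal \<epsilon>"
        unfolding INF_less_iff by blast
      show "\<exists>g\<in>W. \<forall>x\<in>\<Omega>. \<forall>xi\<in>S.
        p (v x *\<^sub>R f x - xi) < \<epsilon> \<longrightarrow> p (v x *\<^sub>R g x - xi) < 2 * \<epsilon>"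
      proof (intro bexI ballI impI)
        fix x xi assume x: "x \<in> \<Omega>" and "xi \<in> S" and lt: "p (v x *\<^sub>R f x - xi) < \<epsilon>"
        have "ennreal (v x * p (f x - g x)) < ennreal \<epsilon>"
          using g(2) SUP_upper[OF x, of "\<lambda>x. ennreal (v x * p (f x - g x))"] by order
        then have "v x * p (f x - g x) < \<epsilon>"
          by (cases "0 \<le> v x * p (f x - g x)") (use e(1) in \<open>auto simp: ennreal_less_iff\<close>)
        then have "p (v x *\<^sub>R f x - v x *\<^sub>R g x) < \<epsilon>" using key x by simp
        moreover have "p (v x *\<^sub>R g x - xi) \<le> p (v x *\<^sub>R g x - v x *\<^sub>R f x) + p (v x *\<^sub>R f x - xi)"
          by (rule semi_tri[OF sp])
        moreover have "p (v x *\<^sub>R g x - v x *\<^sub>R f x) = p (v x *\<^sub>R f x - v x *\<^sub>R g x)"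
          by (rule semi_neg[OF sp])
        ultimately show "p (v x *\<^sub>R g x - xi) < 2 * \<epsilon>" using lt by linarith
      qed (rule g(1))
    qed
  next
    assume H: "\<forall>\<epsilon>>0. \<forall>S. finite S \<longrightarrow> (\<exists>g\<in>W. \<forall>x\<in>\<Omega>. \<forall>xi\<in>S.
        p (v x *\<^sub>R f x - xi) < \<epsilon> \<longrightarrow> p (v x *\<^sub>R g x - xi) < 2 * \<epsilon>)"
    let ?K = "(seminorm_topology A) closure_of ((\<lambda>x. v x *\<^sub>R f x) ` \<Omega>)"
    have sub: "(\<lambda>x. v x *\<^sub>R f x) ` \<Omega> \<subseteq> ?K"
      by (rule closure_of_subset) (simp add: topspace_semi)
    have "weighted_dist v p \<Omega> f W \<le> 0 + ennreal e" if e: "0 < e" for e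
    proof -
      define \<epsilon> where "\<epsilon> = e / 3"
      have ep: "\<epsilon> > 0" using e by (simp add: \<epsilon>_def)
      let ?U = "(\<lambda>c. {y. p (y - c) < \<epsilon>}) ` UNIV"
      have "\<forall>B\<in>?U. openin (seminorm_topology A) B" using ball_open[OF sp assms(3)] by auto
      moreover have "?K \<subseteq> \<Union>?U"
      proof
        fix y assume "y \<in> ?K"
        have "p (0 *\<^sub>R y) = 0" using sp unfolding seminorm_def by (metis abs_0 mult_zero_left)
        then have "y \<in> {z. p (z - y) < \<epsilon>}" using ep by simp
        then show "y \<in> \<Union>?U" by blast
      qed
      ultimately obtain F where F: "finite F" "F \<subseteq> ?U" "?K \<subseteq> \<Union>F"
        using assms(5) unfolding compactin_def by meson
      then obtain S where S: "finite S" "F = (\<lambda>c. {y. p (y - c) < \<epsilon>}) ` S"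
        by (meson finite_subset_image)
      obtain g where g: "g \<in> W" and gp: "\<forall>x\<in>\<Omega>. \<forall>xi\<in>S.
        p (v x *\<^sub>R f x - xi) < \<epsilon> \<longrightarrow> p (v x *\<^sub>R g x - xi) < 2 * \<epsilon>"
        using H ep S(1) by blast
      have "(SUP x\<in>\<Omega>. ennreal (v x * p (f x - g x))) \<le> ennreal e"
      proof (rule SUP_least)
        fix x assume x: "x \<in> \<Omega>"
        then have "v x *\<^sub>R f x \<in> \<Union>F" using sub F(3) by blast
        then obtain xi where xi: "xi \<in> S" "p (v x *\<^sub>R f x - xi) < \<epsilon>" using S(2) by auto
        then have "p (v x *\<^sub>R g x - xi) < 2 * \<epsilon>" using gp x by blast
        moreover have "p (v x *\<^sub>R f x - v x *\<^sub>R g x) \<le> p (v x *\<^sub>R f x - xi) + p (xi - v x *\<^sub>R g x)"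
          by (rule semi_tri[OF sp])
        moreover have "p (xi - v x *\<^sub>R g x) = p (v x *\<^sub>R g x - xi)" by (rule semi_neg[OF sp])
        ultimately have "v x * p (f x - g x) \<le> e"
          using xi(2) key[OF x, of g] unfolding \<epsilon>_def by linarith
        then show "ennreal (v x * p (f x - g x)) \<le> ennreal e" by (rule ennreal_leI)
      qed
      then have "weighted_dist v p \<Omega> f W \<le> ennreal e" unfolding weighted_dist_def
        by (rule INF_lower2[OF g])
      then show ?thesis by simp
    qed
    then have "weighted_dist v p \<Omega> f W \<le> 0" by (rule ennreal_le_epsilon) blast
    then show "weighted_dist v p \<Omega> f W = 0" by (rule antisym) (rule zero_le)
  qed
qed

end
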